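(* Let $M$ be a finite-dimensional $C^*$-algebra, $\Delta:M\to M\otimes M$ an injective (not necessarily unital) $*$-homomorphism with $(\Delta\otimes\mathrm{id})\circ\Delta=(\mathrm{id}\otimes\Delta)\circ\Delta$, and $S:M\to M$ a linear, unital, antimultiplicative, $*$-preserving bijection with $S^2=\mathrm{id}$ and $(S\otimes S)\circ\Delta=\varsigma\circ\Delta\circ S$. Let $\varepsilon:M\to\mathbb{C}$ be a linear map with $(\varepsilon\otimes\mathrm{id})\Delta=(\mathrm{id}\otimes\varepsilon)\Delta=\mathrm{id}$, $\varepsilon(S(x))=\varepsilon(x)$ and $\varepsilon(x^* )=\overline{\varepsilon(x)}$ for all $x\in M$. Put $e=\Delta(1)$ and $\varepsilon_s=\mu(S\otimes\mathrm{id})\Delta$. Then the following two sets of conditions are equivalent: (I) (2) $(\varepsilon\otimes\varepsilon)((x\otimes 1)e(1\otimes y))=\varepsilon(xy)$ for all $x,y\in M$, and (3) $(\varepsilon_s\otimes\mathrm{id})\Delta(x)=(1\otimes x)e$ for all $x\in M$; (II) (A2) $(\varepsilon\otimes\mathrm{id})((x\otimes 1)e(1\otimes y))=(\varepsilon\otimes\mathrm{id})((x\otimes 1)\Delta(y))$ for all $x,y\in M$; (A3) $(\mathrm{id}\otimes\varepsilon\otimes\mathrm{id})[(e\otimes 1)(1\otimes\Delta(x))]=e(1\otimes x)$ for all $x\in M$; (A4) $\varepsilon_s(x)=(\mathrm{id}\otimes\varepsilon)((1\otimes x)e)$ for all $x\in M$.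
   Context: All algebras are finite-dimensional over $\mathbb{C}$. $\varsigma:M\otimes M\to M\otimes M$ is the flip $x\otimes y\mapsto y\otimes x$, and $\mu:M\otimes M\to M$ is the linear map induced by multiplication, $\mu(x\otimes y)=xy$. *)

theory Defs
  imports "HOL-Analysis.Analysis"
begin

text \<open>
  A finite-dimensional complex vector space is modelled (up to linear isomorphism)
  as the coordinate space complex^'i with 'i a finite index type.
  Consequently the algebraic tensor product M (x) M is complex^('i \<times> 'i)
  and M (x) M (x) M is complex^('i \<times> 'i \<times> 'i), with the usual
  elementary tensors.
\<close>

type_synonym 'i alg = "complex^'i"
type_synonym 'i alg2 = "complex^('i \<times> 'i)"
type_synonym 'i alg3 = "complex^('i \<times> 'i \<times> 'i)"

definition bas :: "'i::finite \<Rightarrow> 'i alg" where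
  "bas i = axis i 1"

definition clinear :: "(complex^'a \<Rightarrow> complex^'b) \<Rightarrow> bool" where
  "clinear f \<longleftrightarrow> (\<forall>x y. f (x + y) = f x + f y) \<and> (\<forall>c x. f (c *s x) = c *s f x)"

definition cfunctional :: "(complex^'a \<Rightarrow> complex) \<Rightarrow> bool" where
  "cfunctional f \<longleftrightarrow> (\<forall>x y. f (x + y) = f x + f y) \<and> (\<forall>c x. f (c *s x) = c * f x)"

text \<open>Finite-dimensional C*-algebra structure on complex^'i given by multiplication,
  unit and involution: a unital complex *-algebra admitting a C*-norm
  (completeness is automatic in finite dimension).\<close>
definition fd_cstar :: "('i::finite alg \<Rightarrow> 'i alg \<Rightarrow> 'i alg) \<Rightarrow> 'i alg \<Rightarrow> ('i alg \<Rightarrow> 'i alg) \<Rightarrow> bool" where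
  "fd_cstar mul one st \<longleftrightarrow>
     (\<forall>x y z. mul (mul x y) z = mul x (mul y z)) \<and>
     (\<forall>x y z. mul (x + y) z = mul x z + mul y z) \<and>
     (\<forall>x y z. mul x (y + z) = mul x y + mul x z) \<and>
     (\<forall>c x y. mul (c *s x) y = c *s mul x y) \<and>
     (\<forall>c x y. mul x (c *s y) = c *s mul x y) \<and>
     (\<forall>x. mul one x = x \<and> mul x one = x) \<and>
     (\<forall>x y. st (x + y) = st x + st y) \<and>
     (\<forall>c x. st (c *s x) = cnj c *s st x) \<and>
     (\<forall>x. st (st x) = x) \<and>
     (\<forall>x y. st (mul x y) = mul (st y) (st x)) \<and>
     (\<exists>N :: 'i alg \<Rightarrow> real.
        (\<forall>x. N x = 0 \<longleftrightarrow> x = 0) \<and>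
        (\<forall>x y. N (x + y) \<le> N x + N y) \<and>
        (\<forall>c x. N (c *s x) = cmod c * N x) \<and>
        (\<forall>x y. N (mul x y) \<le> N x * N y) \<and>
        (\<forall>x. N (mul (st x) x) = (N x)\<^sup>2))"

definition tens :: "'i::finite alg \<Rightarrow> 'i alg \<Rightarrow> 'i alg2" where
  "tens x y = (\<chi> p. x $ fst p * y $ snd p)"

definition tens21 :: "'i::finite alg2 \<Rightarrow> 'i alg \<Rightarrow> 'i alg3" where
  "tens21 T y = (\<chi> p. T $ (fst p, fst (snd p)) * y $ snd (snd p))"

definition tens12 :: "'i::finite alg \<Rightarrow> 'i alg2 \<Rightarrow> 'i alg3" where
  "tens12 x T = (\<chi> p. x $ fst p * T $ snd p)"

definition tmult :: "('i::finite alg \<Rightarrow> 'i alg \<Rightarrow> 'i alg) \<Rightarrow> 'i alg2 \<Rightarrow> 'i alg2 \<Rightarrow> 'i alg2" where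
  "tmult mul T U = (\<Sum>p\<in>UNIV. \<Sum>q\<in>UNIV. (T $ p * U $ q) *s
        tens (mul (bas (fst p)) (bas (fst q))) (mul (bas (snd p)) (bas (snd q))))"

definition tstar :: "('i::finite alg \<Rightarrow> 'i alg) \<Rightarrow> 'i alg2 \<Rightarrow> 'i alg2" where
  "tstar st T = (\<Sum>p\<in>UNIV. cnj (T $ p) *s tens (st (bas (fst p))) (st (bas (snd p))))"

definition tmult3 :: "('i::finite alg \<Rightarrow> 'i alg \<Rightarrow> 'i alg) \<Rightarrow> 'i alg3 \<Rightarrow> 'i alg3 \<Rightarrow> 'i alg3" where
  "tmult3 mul T U = (\<Sum>p\<in>UNIV. \<Sum>q\<in>UNIV. (T $ p * U $ q) *s
        tens12 (mul (bas (fst p)) (bas (fst q)))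
          (tens (mul (bas (fst (snd p))) (bas (fst (snd q))))
                (mul (bas (snd (snd p))) (bas (snd (snd q))))))"

definition tmap :: "('i::finite alg \<Rightarrow> 'i alg) \<Rightarrow> ('i alg \<Rightarrow> 'i alg) \<Rightarrow> 'i alg2 \<Rightarrow> 'i alg2" where
  "tmap f g T = (\<Sum>p\<in>UNIV. T $ p *s tens (f (bas (fst p))) (g (bas (snd p))))"

definition fun_id :: "('i::finite alg \<Rightarrow> complex) \<Rightarrow> 'i alg2 \<Rightarrow> 'i alg" where
  "fun_id \<phi> T = (\<Sum>p\<in>UNIV. (T $ p * \<phi> (bas (fst p))) *s bas (snd p))"

definition id_fun :: "('i::finite alg \<Rightarrow> complex) \<Rightarrow> 'i alg2 \<Rightarrow> 'i alg" where
  "id_fun \<phi> T = (\<Sum>p\<in>UNIV. (T $ p * \<phi> (bas (snd p))) *s bas (fst p))"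

definition fun_fun :: "('i::finite alg \<Rightarrow> complex) \<Rightarrow> ('i alg \<Rightarrow> complex) \<Rightarrow> 'i alg2 \<Rightarrow> complex" where
  "fun_fun \<phi> \<psi> T = (\<Sum>p\<in>UNIV. T $ p * \<phi> (bas (fst p)) * \<psi> (bas (snd p)))"

definition id_fun_id :: "('i::finite alg \<Rightarrow> complex) \<Rightarrow> 'i alg3 \<Rightarrow> 'i alg2" where
  "id_fun_id \<phi> T = (\<Sum>p\<in>UNIV. (T $ p * \<phi> (bas (fst (snd p)))) *s
                        tens (bas (fst p)) (bas (snd (snd p))))"

definition map_id :: "('i::finite alg \<Rightarrow> 'i alg2) \<Rightarrow> 'i alg2 \<Rightarrow> 'i alg3" where
  "map_id D T = (\<Sum>p\<in>UNIV. T $ p *s tens21 (D (bas (fst p))) (bas (snd p)))"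

definition id_map :: "('i::finite alg \<Rightarrow> 'i alg2) \<Rightarrow> 'i alg2 \<Rightarrow> 'i alg3" where
  "id_map D T = (\<Sum>p\<in>UNIV. T $ p *s tens12 (bas (fst p)) (D (bas (snd p))))"

definition tflip :: "'i::finite alg2 \<Rightarrow> 'i alg2" where
  "tflip T = (\<chi> p. T $ (snd p, fst p))"

definition tmu :: "('i::finite alg \<Rightarrow> 'i alg \<Rightarrow> 'i alg) \<Rightarrow> 'i alg2 \<Rightarrow> 'i alg" where
  "tmu mul T = (\<Sum>p\<in>UNIV. T $ p *s mul (bas (fst p)) (bas (snd p)))"

end

theory Submission
  imports Defs
begin

definition semilin :: "(complex \<Rightarrow> complex) \<Rightarrow> (complex^'a \<Rightarrow> complex^'b) \<Rightarrow> bool" where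
  "semilin h f \<longleftrightarrow> (\<forall>x y. f (x + y) = f x + f y) \<and> (\<forall>c x. f (c *s x) = h c *s f x)"

lemma clinear_semilin: "clinear f = semilin (\<lambda>c. c) f"
  by (simp add: clinear_def semilin_def)

lemma smult_sum: "(c::complex) *s sum f A = sum (\<lambda>x. c *s f x) A"
  by (simp add: vec_eq_iff sum_distrib_left)

lemma semilin_zero: assumes "semilin h f" shows "f 0 = 0"
proof -
  have "f (0 + 0) = f 0 + f 0" using assms unfolding semilin_def by blast
  then show ?thesis by simp
qed

lemma semilin_sum: assumes "semilin h f" "finite A"
  shows "f (\<Sum>p\<in>A. c p *s v p) = (\<Sum>p\<in>A. h (c p) *s f (v p))"
  using assms(2)
proof (induction A rule: finite_induct)
  case empty then show ?case using semilin_zero[OF assms(1)] by simp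
next
  case (insert x F) then show ?case using assms(1) by (simp add: semilin_def)
qed

lemma cfun_sum: assumes "cfunctional f" "finite A"
  shows "f (\<Sum>p\<in>A. c p *s v p) = (\<Sum>p\<in>A. c p * f (v p))"
  using assms(2)
proof (induction A rule: finite_induct)
  case empty
  have "f (0 + 0) = f 0 + f 0" using assms unfolding cfunctional_def by blast
  then show ?case by simp
next
  case (insert x F) then show ?case using assms(1) by (simp add: cfunctional_def)
qed

lemma bas_comp: "bas i $ j = (if j = i then 1 else 0)"
  by (simp add: bas_def axis_def)

lemma vec_expand: "(\<Sum>i\<in>UNIV. x$i *s bas i) = (x::'i::finite alg)"
  by (simp add: bas_def basis_expansion)

lemma tens_comp: "tens x y $ p = x $ fst p * y $ snd p"
  by (simp add: tens_def)

lemma tens_bas: "tens (bas (fst p)) (bas (snd p)) = (axis p 1 :: 'i::finite alg2)"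
  by (simp add: vec_eq_iff tens_comp bas_comp axis_def prod_eq_iff)

lemma tens_expand: "(\<Sum>p\<in>UNIV. T$p *s tens (bas (fst p)) (bas (snd p))) = (T::'i::finite alg2)"
  by (simp only: tens_bas basis_expansion)

lemma semilin_ext: assumes "semilin h f" "semilin h g" "\<And>a b. f (tens a b) = g (tens a b)"
  shows "f T = g (T::'i::finite alg2)"
proof -
  have "f T = f (\<Sum>p\<in>UNIV. T$p *s tens (bas (fst p)) (bas (snd p)))" by (simp add: tens_expand)
  also have "\<dots> = (\<Sum>p\<in>UNIV. h (T$p) *s g (tens (bas (fst p)) (bas (snd p))))"
    by (simp add: semilin_sum[OF assms(1)] assms(3))
  also have "\<dots> = g (\<Sum>p\<in>UNIV. T$p *s tens (bas (fst p)) (bas (snd p)))"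
    by (simp add: semilin_sum[OF assms(2)])
  finally show ?thesis by (simp add: tens_expand)
qed

lemma clinear_ext: assumes "clinear f" "clinear g" "\<And>a b. f (tens a b) = g (tens a b)"
  shows "f T = g (T::'i::finite alg2)"
  by (rule semilin_ext[of "\<lambda>c. c" f g]) (use assms in \<open>simp_all add: clinear_semilin\<close>)

lemma semilin_lin_sum: "semilin (\<lambda>c. c) (\<lambda>T. \<Sum>p\<in>UNIV. T$p *s V p)"
  by (simp add: semilin_def vector_sadd_rdistrib sum.distrib smult_sum vector_smult_assoc)

lemma clinear_lin_sum: "clinear (\<lambda>T. \<Sum>p\<in>UNIV. T$p *s V p)"
  using semilin_lin_sum clinear_semilin by blast

lemma semilin_cnj_sum: "semilin cnj (\<lambda>T. \<Sum>p\<in>UNIV. cnj (T$p) *s V p)"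
  by (simp add: semilin_def vector_sadd_rdistrib sum.distrib smult_sum vector_smult_assoc)

lemma sum_pairs: "(\<Sum>p\<in>(UNIV::('a::finite\<times>'b::finite) set). f p) = (\<Sum>i\<in>UNIV. \<Sum>j\<in>UNIV. f (i,j))"
  unfolding sum.cartesian_product UNIV_Times_UNIV by simp

lemma clin_expand: assumes "clinear f" shows "f (x::'i::finite alg) = (\<Sum>i\<in>UNIV. x$i *s f (bas i))"
proof -
  have "f x = f (\<Sum>i\<in>UNIV. x$i *s bas i)" by (simp add: vec_expand)
  also have "\<dots> = (\<Sum>i\<in>UNIV. x$i *s f (bas i))"
    by (rule semilin_sum[OF clinear_semilin[THEN iffD1, OF assms]]) simp
  finally show ?thesis .
qed

lemma GE: assumes "\<And>y. clinear (\<lambda>x. F x y)" "\<And>x. clinear (\<lambda>y. F x y)"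
  shows "(\<Sum>p\<in>UNIV. (a$fst p * b$snd p) *s F (bas (fst p)) (bas (snd p))) = F (a::'i::finite alg) (b::'i alg)"
proof -
  have "(\<Sum>p\<in>UNIV. (a$fst p * b$snd p) *s F (bas (fst p)) (bas (snd p)))
      = (\<Sum>i\<in>UNIV. a$i *s (\<Sum>j\<in>UNIV. b$j *s F (bas i) (bas j)))"
    by (simp add: sum_pairs smult_sum vector_smult_assoc)
  also have "\<dots> = (\<Sum>i\<in>UNIV. a$i *s F (bas i) b)"
  proof -
    have "F (bas i) b = (\<Sum>j\<in>UNIV. b$j *s F (bas i) (bas j))" for i
      using clin_expand[OF assms(2)[of "bas i"], of b] by simp
    then show ?thesis by simp
  qed
  also have "\<dots> = F a b" using clin_expand[OF assms(1)[of b], of a] by simp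
  finally show ?thesis .
qed

lemma GE3: assumes "\<And>y z. clinear (\<lambda>x. F x y z)" "\<And>x z. clinear (\<lambda>y. F x y z)" "\<And>x y. clinear (\<lambda>z. F x y z)"
  shows "(\<Sum>p\<in>UNIV. (a$fst p * b$fst (snd p) * c$snd (snd p)) *s F (bas (fst p)) (bas (fst (snd p))) (bas (snd (snd p))))
     = F (a::'i::finite alg) (b::'i alg) (c::'i alg)"
proof -
  have inner: "(\<Sum>q\<in>UNIV. (b$fst q * c$snd q) *s F (bas i) (bas (fst q)) (bas (snd q))) = F (bas i) b c" for i
    using GE[of "\<lambda>x y. F (bas i) x y" b c] assms(2,3) by simp
  have "(\<Sum>p\<in>UNIV. (a$fst p * b$fst (snd p) * c$snd (snd p)) *s F (bas (fst p)) (bas (fst (snd p))) (bas (snd (snd p))))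
      = (\<Sum>i\<in>UNIV. \<Sum>q\<in>UNIV. (a$i * b$fst q * c$snd q) *s F (bas i) (bas (fst q)) (bas (snd q)))"
    by (subst sum_pairs) simp
  also have "\<dots> = (\<Sum>i\<in>UNIV. a$i *s (\<Sum>q\<in>UNIV. (b$fst q * c$snd q) *s F (bas i) (bas (fst q)) (bas (snd q))))"
    by (simp only: smult_sum vector_smult_assoc mult.assoc)
  also have "\<dots> = (\<Sum>i\<in>UNIV. a$i *s F (bas i) b c)"
    by (simp only: inner)
  also have "\<dots> = F a b c" using clin_expand[OF assms(1)[of b c], of a] by simp
  finally show ?thesis by (simp only:)
qed

lemma tens_clin1: "clinear (\<lambda>x. tens x y)"
  unfolding clinear_def tens_def by (simp add: vec_eq_iff distrib_right)
lemma tens_clin2: "clinear (\<lambda>y. tens x y)"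
  unfolding clinear_def tens_def by (simp add: vec_eq_iff distrib_left)

lemma clinear_comp: "clinear f \<Longrightarrow> clinear g \<Longrightarrow> clinear (\<lambda>x. f (g x))"
  by (simp add: clinear_def)
lemma clinear_id: "clinear (\<lambda>x. x)" by (simp add: clinear_def)
lemma clinear_smult: "clinear f \<Longrightarrow> clinear (\<lambda>x. c *s f x)"
  by (simp add: clinear_def vector_add_ldistrib vector_smult_assoc mult.commute)
lemma clinear_scal: "cfunctional \<phi> \<Longrightarrow> clinear (\<lambda>x. \<phi> x *s v)"
  by (simp add: clinear_def cfunctional_def vector_sadd_rdistrib vector_smult_assoc)

lemma semilin_comp: "semilin h f \<Longrightarrow> semilin k g \<Longrightarrow> semilin (\<lambda>c. h (k c)) (\<lambda>x. f (g x))"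
  by (simp add: semilin_def)

lemma clinear_sum_fun: "(\<And>q. clinear (f q)) \<Longrightarrow> clinear (\<lambda>x. \<Sum>q\<in>UNIV. c q *s f q x)"
  unfolding clinear_def
  by (simp add: vector_add_ldistrib sum.distrib smult_sum vector_smult_assoc mult.commute)



lemma tens_sums: "tens (\<Sum>i\<in>(UNIV::'k::finite set). \<alpha> i *s u i) (\<Sum>j\<in>(UNIV::'l::finite set). \<beta> j *s v j)
   = (\<Sum>p\<in>UNIV. (\<alpha> (fst p) * \<beta> (snd p)) *s tens (u (fst p)) (v (snd p)))"
proof -
  have "tens (\<Sum>i\<in>UNIV. \<alpha> i *s u i) (\<Sum>j\<in>UNIV. \<beta> j *s v j)
      = (\<Sum>i\<in>UNIV. \<alpha> i *s tens (u i) (\<Sum>j\<in>UNIV. \<beta> j *s v j))"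
    by (simp add: semilin_sum[OF tens_clin1[unfolded clinear_semilin]])
  also have "\<dots> = (\<Sum>i\<in>UNIV. \<alpha> i *s (\<Sum>j\<in>UNIV. \<beta> j *s tens (u i) (v j)))"
    by (simp add: semilin_sum[OF tens_clin2[unfolded clinear_semilin]])
  also have "\<dots> = (\<Sum>p\<in>UNIV. (\<alpha> (fst p) * \<beta> (snd p)) *s tens (u (fst p)) (v (snd p)))"
    by (simp add: sum_pairs smult_sum vector_smult_assoc)
  finally show ?thesis .
qed

lemma tmap_alt: "tmap f g T = (\<Sum>p\<in>UNIV. T$p *s tens (f (bas (fst p))) (g (bas (snd p))))"
  by (simp add: tmap_def)

lemma tmap_clin: "clinear (tmap f g)"
  unfolding tmap_def by (rule clinear_lin_sum)

lemma tmap_tens: assumes "clinear f" "clinear g"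
  shows "tmap f g (tens a b) = tens (f a) (g b)"
proof -
  have "tmap f g (tens a b) = (\<Sum>p\<in>UNIV. (a$fst p * b$snd p) *s (\<lambda>x y. tens (f x) (g y)) (bas (fst p)) (bas (snd p)))"
    by (simp add: tmap_def tens_comp)
  also have "\<dots> = tens (f a) (g b)"
    by (rule GE) (auto intro: clinear_comp tens_clin1 tens_clin2 assms)
  finally show ?thesis .
qed

lemma fun_id_alt: "fun_id \<phi> T = (\<Sum>p\<in>UNIV. T$p *s (\<phi> (bas (fst p)) *s bas (snd p)))"
  by (simp add: fun_id_def)

lemma fun_id_clin: "clinear (fun_id \<phi>)"
  unfolding fun_id_alt by (rule clinear_lin_sum)

lemma fun_id_tens: assumes "cfunctional \<phi>"
  shows "fun_id \<phi> (tens a b) = \<phi> a *s b"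
proof -
  have "fun_id \<phi> (tens a b) = (\<Sum>p\<in>UNIV. (a$fst p * b$snd p) *s (\<lambda>x y. \<phi> x *s y) (bas (fst p)) (bas (snd p)))"
    by (simp add: fun_id_alt tens_comp)
  also have "\<dots> = \<phi> a *s b"
    by (rule GE) (auto intro: clinear_scal clinear_smult clinear_id assms)
  finally show ?thesis .
qed

lemma id_fun_alt: "id_fun \<phi> T = (\<Sum>p\<in>UNIV. T$p *s (\<phi> (bas (snd p)) *s bas (fst p)))"
  by (simp add: id_fun_def)

lemma id_fun_clin: "clinear (id_fun \<phi>)"
  unfolding id_fun_alt by (rule clinear_lin_sum)

lemma id_fun_tens: assumes "cfunctional \<phi>"
  shows "id_fun \<phi> (tens a b) = \<phi> b *s a"
proof -
  have "id_fun \<phi> (tens a b) = (\<Sum>p\<in>UNIV. (a$fst p * b$snd p) *s (\<lambda>x y. \<phi> y *s x) (bas (fst p)) (bas (snd p)))"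
    by (simp add: id_fun_alt tens_comp)
  also have "\<dots> = \<phi> b *s a"
    by (rule GE) (auto intro: clinear_scal clinear_smult clinear_id assms)
  finally show ?thesis .
qed

lemma fun_fun_1: assumes "cfunctional \<psi>" shows "fun_fun \<phi> \<psi> T = \<psi> (fun_id \<phi> T)"
  unfolding fun_id_def fun_fun_def by (simp add: cfun_sum[OF assms] mult.assoc)

lemma fun_fun_2: assumes "cfunctional \<phi>" shows "fun_fun \<phi> \<psi> T = \<phi> (id_fun \<psi> T)"
  unfolding id_fun_def fun_fun_def by (simp add: cfun_sum[OF assms] mult.assoc mult.commute mult.left_commute)

lemma tstar_alt: "tstar st T = (\<Sum>p\<in>UNIV. cnj (T$p) *s tens (st (bas (fst p))) (st (bas (snd p))))"
  by (simp add: tstar_def)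

lemma tstar_semilin: "semilin cnj (tstar st)"
  unfolding tstar_alt by (rule semilin_cnj_sum)

lemma tstar_tens: assumes "semilin cnj st"
  shows "tstar st (tens a b) = tens (st a) (st b)"
proof -
  have ea: "st a = (\<Sum>i\<in>UNIV. cnj (a$i) *s st (bas i))"
    using semilin_sum[OF assms, of UNIV "\<lambda>i. a$i" bas] by (simp add: vec_expand)
  have eb: "st b = (\<Sum>i\<in>UNIV. cnj (b$i) *s st (bas i))"
    using semilin_sum[OF assms, of UNIV "\<lambda>i. b$i" bas] by (simp add: vec_expand)
  show ?thesis unfolding ea eb tens_sums tstar_alt by (simp add: tens_comp)
qed

lemma tens21_comp: "tens21 T y $ p = T $ (fst p, fst (snd p)) * y $ snd (snd p)"
  by (simp add: tens21_def)
lemma tens12_comp: "tens12 x T $ p = x $ fst p * T $ snd p"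
  by (simp add: tens12_def)

lemma tens21_clin: "clinear (\<lambda>T. tens21 T y)"
  unfolding clinear_def by (simp add: vec_eq_iff tens21_comp distrib_right)
lemma tens12_clin: "clinear (\<lambda>T. tens12 x T)"
  unfolding clinear_def by (simp add: vec_eq_iff tens12_comp distrib_left)
lemma tens12_clin1: "clinear (\<lambda>x. tens12 x T)"
  unfolding clinear_def by (simp add: vec_eq_iff tens12_comp distrib_right)

lemma tens21_tens: "tens21 (tens a b) y = tens12 a (tens b y)"
  by (simp add: vec_eq_iff tens21_comp tens12_comp tens_comp)

lemma id_fun_id_alt: "id_fun_id \<phi> T = (\<Sum>p\<in>UNIV. T$p *s (\<phi> (bas (fst (snd p))) *s tens (bas (fst p)) (bas (snd (snd p)))))"
  by (simp add: id_fun_id_def)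

lemma id_fun_id_clin: "clinear (id_fun_id \<phi>)"
  unfolding id_fun_id_alt by (rule clinear_lin_sum)

lemma id_fun_id_tens: assumes "cfunctional \<phi>"
  shows "id_fun_id \<phi> (tens12 a (tens b c)) = \<phi> b *s tens a c"
proof -
  have "id_fun_id \<phi> (tens12 a (tens b c)) = (\<Sum>p\<in>UNIV. (a$fst p * b$fst (snd p) * c$snd (snd p)) *s
       (\<lambda>x y z. \<phi> y *s tens x z) (bas (fst p)) (bas (fst (snd p))) (bas (snd (snd p))))"
    by (simp add: id_fun_id_alt tens12_comp tens_comp mult.assoc)
  also have "\<dots> = \<phi> b *s tens a c"
    by (rule GE3) (auto intro: clinear_scal clinear_smult tens_clin1 tens_clin2 assms)
  finally show ?thesis .
qed

locale fda =
  fixes mul :: "'i::finite alg \<Rightarrow> 'i alg \<Rightarrow> 'i alg" and one :: "'i alg" and st :: "'i alg \<Rightarrow> 'i alg"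
  assumes M: "fd_cstar mul one st"
begin

lemma mul_assoc: "mul (mul x y) z = mul x (mul y z)" using M by (simp add: fd_cstar_def)
lemma mul_add1: "mul (x + y) z = mul x z + mul y z" using M by (simp add: fd_cstar_def)
lemma mul_add2: "mul x (y + z) = mul x y + mul x z" using M by (simp add: fd_cstar_def)
lemma mul_sm1: "mul (c *s x) y = c *s mul x y" using M by (simp add: fd_cstar_def)
lemma mul_sm2: "mul x (c *s y) = c *s mul x y" using M by (simp add: fd_cstar_def)
lemma one_l[simp]: "mul one x = x" using M by (simp add: fd_cstar_def)
lemma one_r[simp]: "mul x one = x" using M by (simp add: fd_cstar_def)
lemma st_add: "st (x + y) = st x + st y" using M by (simp add: fd_cstar_def)
lemma st_sm: "st (c *s x) = cnj c *s st x" using M by (simp add: fd_cstar_def)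
lemma st_st[simp]: "st (st x) = x" using M by (simp add: fd_cstar_def)
lemma st_mul: "st (mul x y) = mul (st y) (st x)" using M by (simp add: fd_cstar_def)

lemma st_one[simp]: "st one = one"
proof -
  have "st (mul (st one) one) = mul (st one) (st (st one))" by (simp only: st_mul)
  then have "st (st one) = mul (st one) one" by simp
  then show ?thesis by simp
qed

lemma mul_clin1: "clinear (\<lambda>x. mul x y)" by (simp add: clinear_def mul_add1 mul_sm1)
lemma mul_clin2: "clinear (\<lambda>y. mul x y)" by (simp add: clinear_def mul_add2 mul_sm2)
lemma st_semilin: "semilin cnj st" by (simp add: semilin_def st_add st_sm)

lemma conj_clin: assumes "clinear f" shows "clinear (\<lambda>x. st (f (st x)))"
  using assms by (simp add: clinear_def st_add st_sm)

definition W :: "'i \<times> 'i \<Rightarrow> 'i \<times> 'i \<Rightarrow> 'i alg2" where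
  "W p q = tens (mul (bas (fst p)) (bas (fst q))) (mul (bas (snd p)) (bas (snd q)))"

lemma tmult_alt1: "tmult mul T U = (\<Sum>p\<in>UNIV. T$p *s (\<Sum>q\<in>UNIV. U$q *s W p q))"
  by (simp add: tmult_def W_def smult_sum vector_smult_assoc)

lemma tmult_alt2: "tmult mul T U = (\<Sum>q\<in>UNIV. U$q *s (\<Sum>p\<in>UNIV. T$p *s W p q))"
  unfolding tmult_def W_def smult_sum vector_smult_assoc
  by (subst sum.swap) (simp add: mult.commute)

lemma tmult_clin1: "clinear (\<lambda>T. tmult mul T U)"
  unfolding tmult_alt1 by (rule clinear_lin_sum)
lemma tmult_clin2: "clinear (\<lambda>U. tmult mul T U)"
  unfolding tmult_alt2 by (rule clinear_lin_sum)

lemma tmult_tens: "tmult mul (tens a b) (tens c d) = tens (mul a c) (mul b d)"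
proof -
  have "tmult mul (tens a b) (tens c d) = (\<Sum>p\<in>UNIV. (a$fst p * b$snd p) *s
     (\<lambda>x y. \<Sum>q\<in>UNIV. (tens c d)$q *s tens (mul x (bas (fst q))) (mul y (bas (snd q)))) (bas (fst p)) (bas (snd p)))"
    by (simp add: tmult_alt1 W_def tens_comp[of a b])
  also have "\<dots> = (\<Sum>q\<in>UNIV. (tens c d)$q *s tens (mul a (bas (fst q))) (mul b (bas (snd q))))"
    by (rule GE) (auto intro!: clinear_sum_fun clinear_comp[OF tens_clin1 mul_clin1] clinear_comp[OF tens_clin2 mul_clin1])
  also have "\<dots> = (\<Sum>q\<in>UNIV. (c$fst q * d$snd q) *s (\<lambda>x y. tens (mul a x) (mul b y)) (bas (fst q)) (bas (snd q)))"
    by (simp add: tens_comp)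
  also have "\<dots> = tens (mul a c) (mul b d)"
    by (rule GE) (auto intro!: clinear_comp[OF tens_clin1 mul_clin2] clinear_comp[OF tens_clin2 mul_clin2])
  finally show ?thesis .
qed

definition W3 :: "'i \<times> 'i \<times> 'i \<Rightarrow> 'i \<times> 'i \<times> 'i \<Rightarrow> 'i alg3" where
  "W3 p q = tens12 (mul (bas (fst p)) (bas (fst q)))
          (tens (mul (bas (fst (snd p))) (bas (fst (snd q))))
                (mul (bas (snd (snd p))) (bas (snd (snd q)))))"

lemma tmult3_alt1: "tmult3 mul T U = (\<Sum>p\<in>UNIV. T$p *s (\<Sum>q\<in>UNIV. U$q *s W3 p q))"
  by (simp add: tmult3_def W3_def smult_sum vector_smult_assoc)

lemma tmult3_alt2: "tmult3 mul T U = (\<Sum>q\<in>UNIV. U$q *s (\<Sum>p\<in>UNIV. T$p *s W3 p q))"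
  unfolding tmult3_def W3_def smult_sum vector_smult_assoc
  by (subst sum.swap) (simp add: mult.commute)

lemma tmult3_clin1: "clinear (\<lambda>T. tmult3 mul T U)"
  unfolding tmult3_alt1 by (rule clinear_lin_sum)
lemma tmult3_clin2: "clinear (\<lambda>U. tmult3 mul T U)"
  unfolding tmult3_alt2 by (rule clinear_lin_sum)

lemma t12c: "tens12 x (tens y z) $ p = x$fst p * y$fst (snd p) * z$snd (snd p)"
  by (simp add: tens12_comp tens_comp mult.assoc)

lemma tmult3_tens: "tmult3 mul (tens12 a (tens b c)) (tens12 a' (tens b' c'))
    = tens12 (mul a a') (tens (mul b b') (mul c c'))"
proof -
  have "tmult3 mul (tens12 a (tens b c)) (tens12 a' (tens b' c')) = (\<Sum>p\<in>UNIV. (a$fst p * b$fst (snd p) * c$snd (snd p)) *s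
     (\<lambda>x y z. \<Sum>q\<in>UNIV. (tens12 a' (tens b' c'))$q *s tens12 (mul x (bas (fst q)))
          (tens (mul y (bas (fst (snd q)))) (mul z (bas (snd (snd q))))))
       (bas (fst p)) (bas (fst (snd p))) (bas (snd (snd p))))"
    by (simp add: tmult3_alt1 W3_def t12c[of a b c])
  also have "\<dots> = (\<Sum>q\<in>UNIV. (tens12 a' (tens b' c'))$q *s tens12 (mul a (bas (fst q)))
          (tens (mul b (bas (fst (snd q)))) (mul c (bas (snd (snd q))))))"
    by (rule GE3) (auto intro!: clinear_sum_fun clinear_comp[OF tens12_clin1 mul_clin1]
        clinear_comp[OF tens12_clin clinear_comp[OF tens_clin1 mul_clin1]]
        clinear_comp[OF tens12_clin clinear_comp[OF tens_clin2 mul_clin1]])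
  also have "\<dots> = (\<Sum>q\<in>UNIV. (a'$fst q * b'$fst (snd q) * c'$snd (snd q)) *s
     (\<lambda>x y z. tens12 (mul a x) (tens (mul b y) (mul c z))) (bas (fst q)) (bas (fst (snd q))) (bas (snd (snd q))))"
    by (simp add: t12c)
  also have "\<dots> = tens12 (mul a a') (tens (mul b b') (mul c c'))"
    by (rule GE3) (auto intro!: clinear_comp[OF tens12_clin1 mul_clin2]
        clinear_comp[OF tens12_clin clinear_comp[OF tens_clin1 mul_clin2]]
        clinear_comp[OF tens12_clin clinear_comp[OF tens_clin2 mul_clin2]])
  finally show ?thesis .
qed

lemma tstar_tens': "tstar st (tens a b) = tens (st a) (st b)"
  by (rule tstar_tens[OF st_semilin])

lemma tstar_tstar: "tstar st (tstar st T) = T"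
proof (rule semilin_ext[of "\<lambda>c. c" "\<lambda>T. tstar st (tstar st T)" "\<lambda>T. T"])
  show "semilin (\<lambda>c. c) (\<lambda>T. tstar st (tstar st T))"
    using semilin_comp[OF tstar_semilin tstar_semilin] by simp
  show "semilin (\<lambda>c. c) (\<lambda>T. T)" by (simp add: semilin_def)
  show "tstar st (tstar st (tens a b)) = tens a b" for a b by (simp add: tstar_tens')
qed

lemma tstar_tmult: "tstar st (tmult mul T U) = tmult mul (tstar st U) (tstar st T)"
proof -
  have sl1: "semilin cnj (\<lambda>T. tstar st (tmult mul T U))" for U
    using semilin_comp[OF tstar_semilin tmult_clin1[unfolded clinear_semilin]] by simp
  have sl2: "semilin cnj (\<lambda>T. tmult mul U (tstar st T))" for U
    using semilin_comp[OF tmult_clin2[unfolded clinear_semilin] tstar_semilin] by simp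
  have sl3: "semilin cnj (\<lambda>U. tstar st (tmult mul T U))" for T
    using semilin_comp[OF tstar_semilin tmult_clin2[unfolded clinear_semilin]] by simp
  have sl4: "semilin cnj (\<lambda>U. tmult mul (tstar st U) T)" for T
    using semilin_comp[OF tmult_clin1[unfolded clinear_semilin] tstar_semilin] by simp
  have "tstar st (tmult mul (tens a b) U) = tmult mul (tstar st U) (tstar st (tens a b))" for a b
    by (rule semilin_ext[OF sl3 sl4]) (simp add: tmult_tens tstar_tens' st_mul)
  then show ?thesis
    by (rule semilin_ext[OF sl1 sl2])
qed

lemma tstar_tmap: assumes "clinear f" "clinear g"
  shows "tstar st (tmap f g T) = tmap (\<lambda>x. st (f (st x))) (\<lambda>x. st (g (st x))) (tstar st T)"
proof (rule semilin_ext[of cnj "\<lambda>T. tstar st (tmap f g T)" "\<lambda>T. tmap (\<lambda>x. st (f (st x))) (\<lambda>x. st (g (st x))) (tstar st T)"])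
  show "semilin cnj (\<lambda>T. tstar st (tmap f g T))"
    using semilin_comp[OF tstar_semilin[of st] tmap_clin[of f g, unfolded clinear_semilin]] by simp
  show "semilin cnj (\<lambda>T. tmap (\<lambda>x. st (f (st x))) (\<lambda>x. st (g (st x))) (tstar st T))"
    using semilin_comp[OF tmap_clin[of "\<lambda>x. st (f (st x))" "\<lambda>x. st (g (st x))", unfolded clinear_semilin] tstar_semilin[of st]] by simp
  show "tstar st (tmap f g (tens a b)) = tmap (\<lambda>x. st (f (st x))) (\<lambda>x. st (g (st x))) (tstar st (tens a b))" for a b
    by (simp add: tmap_tens assms conj_clin tstar_tens')
qed

lemma id_fun_tstar: assumes "cfunctional \<phi>" "\<And>x. \<phi> (st x) = cnj (\<phi> x)"
  shows "id_fun \<phi> (tstar st T) = st (id_fun \<phi> T)"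
proof (rule semilin_ext[of cnj "\<lambda>T. id_fun \<phi> (tstar st T)" "\<lambda>T. st (id_fun \<phi> T)"])
  show "semilin cnj (\<lambda>T. id_fun \<phi> (tstar st T))"
    using semilin_comp[OF id_fun_clin[of \<phi>, unfolded clinear_semilin] tstar_semilin[of st]] by simp
  show "semilin cnj (\<lambda>T. st (id_fun \<phi> T))"
    using semilin_comp[OF st_semilin id_fun_clin[of \<phi>, unfolded clinear_semilin]] by simp
  show "id_fun \<phi> (tstar st (tens a b)) = st (id_fun \<phi> (tens a b))" for a b
    by (simp add: id_fun_tens assms tstar_tens' st_sm)
qed

end

lemma clin_sm: "clinear f \<Longrightarrow> f (c *s x) = c *s f x" by (simp add: clinear_def)
lemma cfun_sm: "cfunctional f \<Longrightarrow> f (c *s x) = c * f x" by (simp add: cfunctional_def)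
lemma tens_sm1: "tens (c *s x) y = c *s tens x y" using tens_clin1 clin_sm by fast
lemma tens_sm2: "tens x (c *s y) = c *s tens x y" using tens_clin2 clin_sm by fast

context fda
begin

lemma cfun_mul: "cfunctional \<phi> \<Longrightarrow> cfunctional (\<lambda>w. \<phi> (mul x w))"
  by (simp add: cfunctional_def mul_add2 mul_sm2)

lemma C1: "tmult mul T (tens one x) = tmap (\<lambda>z. z) (\<lambda>z. mul z x) T"
  by (rule clinear_ext[OF tmult_clin1 tmap_clin]) (simp add: tmult_tens tmap_tens clinear_id mul_clin1)

lemma C2: "tmult mul (tens one x) T = tmap (\<lambda>z. z) (\<lambda>z. mul x z) T"
  by (rule clinear_ext[OF tmult_clin2 tmap_clin]) (simp add: tmult_tens tmap_tens clinear_id mul_clin2)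

lemma C3: assumes "cfunctional \<phi>" "clinear f"
  shows "id_fun \<phi> (tmap f (\<lambda>z. z) T) = f (id_fun \<phi> T)"
  by (rule clinear_ext[OF clinear_comp[OF id_fun_clin tmap_clin] clinear_comp[OF assms(2) id_fun_clin]])
     (simp add: tmap_tens id_fun_tens assms clinear_id clin_sm)

lemma C4: assumes "cfunctional \<phi>"
  shows "id_fun \<phi> (tmult mul (tens x one) U) = mul x (id_fun \<phi> U)"
  by (rule clinear_ext[OF clinear_comp[OF id_fun_clin tmult_clin2] clinear_comp[OF mul_clin2 id_fun_clin]])
     (simp add: tmult_tens id_fun_tens assms mul_sm2)

lemma C5: assumes "cfunctional \<phi>"
  shows "fun_id \<phi> (tmult mul (tens x one) U) = fun_id (\<lambda>w. \<phi> (mul x w)) U"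
  by (rule clinear_ext[OF clinear_comp[OF fun_id_clin tmult_clin2] fun_id_clin])
     (simp add: tmult_tens fun_id_tens assms cfun_mul)

lemma C6: assumes "cfunctional \<phi>"
  shows "fun_id \<phi> (tmult mul V (tens one y)) = mul (fun_id \<phi> V) y"
  by (rule clinear_ext[OF clinear_comp[OF fun_id_clin tmult_clin1] clinear_comp[OF mul_clin1 fun_id_clin]])
     (simp add: tmult_tens fun_id_tens assms mul_sm1)

lemma C7: assumes "cfunctional \<phi>" "clinear g"
  shows "fun_id \<phi> (tmap (\<lambda>z. z) g T) = g (fun_id \<phi> T)"
  by (rule clinear_ext[OF clinear_comp[OF fun_id_clin tmap_clin] clinear_comp[OF assms(2) fun_id_clin]])
     (simp add: tmap_tens fun_id_tens assms clinear_id clin_sm)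

lemma Lclin: "clinear (\<lambda>z. fun_id \<phi> (tmult mul (tens z one) U))"
  by (rule clinear_comp[OF fun_id_clin clinear_comp[OF tmult_clin1 tens_clin1]])

lemma Gclin: "clinear (\<lambda>z. id_fun \<phi> (tmult mul T (tens one z)))"
  by (rule clinear_comp[OF id_fun_clin clinear_comp[OF tmult_clin2 tens_clin2]])

lemma LHS6_clin1: "clinear (\<lambda>T. id_fun_id \<phi> (tmult3 mul (tens21 T one) (tens12 one U)))"
  by (rule clinear_comp[OF id_fun_id_clin clinear_comp[OF tmult3_clin1 tens21_clin]])
lemma LHS6_clin2: "clinear (\<lambda>U. id_fun_id \<phi> (tmult3 mul (tens21 T one) (tens12 one U)))"
  by (rule clinear_comp[OF id_fun_id_clin clinear_comp[OF tmult3_clin2 tens12_clin]])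

lemma L6a: assumes "cfunctional \<phi>"
  shows "id_fun_id \<phi> (tmult3 mul (tens21 T one) (tens12 one U))
       = tmap (\<lambda>z. z) (\<lambda>z. fun_id \<phi> (tmult mul (tens z one) U)) T"
proof -
  have "id_fun_id \<phi> (tmult3 mul (tens21 (tens a b) one) (tens12 one U))
       = tmap (\<lambda>z. z) (\<lambda>z. fun_id \<phi> (tmult mul (tens z one) U)) (tens a b)" for a b
  proof -
    have "id_fun_id \<phi> (tmult3 mul (tens21 (tens a b) one) (tens12 one U))
       = tens a (fun_id \<phi> (tmult mul (tens b one) U))"
    proof (rule clinear_ext[OF LHS6_clin2 clinear_comp[OF tens_clin2 clinear_comp[OF fun_id_clin tmult_clin2]]])
      fix c d
      show "id_fun_id \<phi> (tmult3 mul (tens21 (tens a b) one) (tens12 one (tens c d))) =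
          tens a (fun_id \<phi> (tmult mul (tens b one) (tens c d)))"
        by (simp add: tens21_tens tmult3_tens id_fun_id_tens assms tmult_tens fun_id_tens tens_sm2)
    qed
    then show ?thesis by (simp add: tmap_tens clinear_id Lclin)
  qed
  then show ?thesis by (rule clinear_ext[OF LHS6_clin1 tmap_clin])
qed

lemma L6b: assumes "cfunctional \<phi>"
  shows "id_fun_id \<phi> (tmult3 mul (tens21 T one) (tens12 one U))
       = tmap (\<lambda>z. id_fun \<phi> (tmult mul T (tens one z))) (\<lambda>z. z) U"
proof -
  have "id_fun_id \<phi> (tmult3 mul (tens21 T one) (tens12 one (tens c d)))
       = tmap (\<lambda>z. id_fun \<phi> (tmult mul T (tens one z))) (\<lambda>z. z) (tens c d)" for c d
  proof -
    have "id_fun_id \<phi> (tmult3 mul (tens21 T one) (tens12 one (tens c d)))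
       = tens (id_fun \<phi> (tmult mul T (tens one c))) d"
    proof (rule clinear_ext[OF LHS6_clin1 clinear_comp[OF tens_clin1 clinear_comp[OF id_fun_clin tmult_clin1]]])
      fix a b
      show "id_fun_id \<phi> (tmult3 mul (tens21 (tens a b) one) (tens12 one (tens c d))) =
          tens (id_fun \<phi> (tmult mul (tens a b) (tens one c))) d"
        by (simp add: tens21_tens tmult3_tens id_fun_id_tens assms tmult_tens id_fun_tens tens_sm1)
    qed
    then show ?thesis by (simp add: tmap_tens clinear_id Gclin)
  qed
  then show ?thesis by (rule clinear_ext[OF LHS6_clin2 tmap_clin])
qed

end

lemma tmu_clin: "clinear (tmu mul)"
  unfolding tmu_def by (rule clinear_lin_sum)

theorem proposition2p1p2:
  fixes mul :: "'i::finite alg \<Rightarrow> 'i alg \<Rightarrow> 'i alg"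
    and one :: "'i alg"
    and st :: "'i alg \<Rightarrow> 'i alg"
    and \<Delta> :: "'i alg \<Rightarrow> 'i alg2"
    and S :: "'i alg \<Rightarrow> 'i alg"
    and \<epsilon> :: "'i alg \<Rightarrow> complex"
  assumes M: "fd_cstar mul one st"
    and D_lin: "clinear \<Delta>"
    and D_inj: "inj \<Delta>"
    and D_mult: "\<And>x y. \<Delta> (mul x y) = tmult mul (\<Delta> x) (\<Delta> y)"
    and D_star: "\<And>x. \<Delta> (st x) = tstar st (\<Delta> x)"
    and D_coass: "\<And>x. map_id \<Delta> (\<Delta> x) = id_map \<Delta> (\<Delta> x)"
    and S_lin: "clinear S"
    and S_unit: "S one = one"
    and S_anti: "\<And>x y. S (mul x y) = mul (S y) (S x)"
    and S_star: "\<And>x. S (st x) = st (S x)"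
    and S_bij: "bij S"
    and S_inv: "\<And>x. S (S x) = x"
    and S_D: "\<And>x. tmap S S (\<Delta> x) = tflip (\<Delta> (S x))"
    and eps_lin: "cfunctional \<epsilon>"
    and eps_counit1: "\<And>x. fun_id \<epsilon> (\<Delta> x) = x"
    and eps_counit2: "\<And>x. id_fun \<epsilon> (\<Delta> x) = x"
    and eps_S: "\<And>x. \<epsilon> (S x) = \<epsilon> x"
    and eps_star: "\<And>x. \<epsilon> (st x) = cnj (\<epsilon> x)"
  defines "e \<equiv> \<Delta> one"
    and "\<epsilon>s \<equiv> (\<lambda>x. tmu mul (tmap S id (\<Delta> x)))"
  shows "((\<forall>x y. fun_fun \<epsilon> \<epsilon> (tmult mul (tmult mul (tens x one) e) (tens one y))
                   = \<epsilon> (mul x y)) \<and>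
          (\<forall>x. tmap \<epsilon>s id (\<Delta> x) = tmult mul (tens one x) e))
     \<longleftrightarrow>
         ((\<forall>x y. fun_id \<epsilon> (tmult mul (tmult mul (tens x one) e) (tens one y))
                   = fun_id \<epsilon> (tmult mul (tens x one) (\<Delta> y))) \<and>
          (\<forall>x. id_fun_id \<epsilon> (tmult3 mul (tens21 e one) (tens12 one (\<Delta> x)))
                   = tmult mul e (tens one x)) \<and>
          (\<forall>x. \<epsilon>s x = id_fun \<epsilon> (tmult mul (tens one x) e)))"
proof -
  interpret fda mul one st by (rule fda.intro[OF M])
  have eps: "cfunctional \<epsilon>" by (rule eps_lin)
  have e_star: "tstar st e = e" unfolding e_def using D_star[of one] by simp
  have Dst: "\<Delta> (st x) = tstar st (\<Delta> x)" for x by (rule D_star)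
  have es_clin: "clinear \<epsilon>s"
    unfolding \<epsilon>s_def by (rule clinear_comp[OF tmu_clin clinear_comp[OF tmap_clin D_lin]])
  define G where "G = (\<lambda>y. id_fun \<epsilon> (tmult mul e (tens one y)))"
  define H where "H = (\<lambda>y. id_fun \<epsilon> (tmult mul (tens one y) e))"
  have Gc: "clinear G" unfolding G_def by (rule Gclin)
  have Hc: "clinear H" unfolding H_def
    by (rule clinear_comp[OF id_fun_clin clinear_comp[OF tmult_clin1 tens_clin2]])
  have GH: "st (G (st y)) = H y" for y
  proof -
    have "st (G (st y)) = id_fun \<epsilon> (tstar st (tmult mul e (tens one (st y))))"
      unfolding G_def by (rule id_fun_tstar[OF eps eps_star, symmetric])
    also have "\<dots> = H y" unfolding H_def by (simp add: tstar_tmult tstar_tens' e_star)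
    finally show ?thesis .
  qed
  have HG: "st (H (st y)) = G y" for y
  proof -
    have "st (H (st y)) = id_fun \<epsilon> (tstar st (tmult mul (tens one (st y)) e))"
      unfolding H_def by (rule id_fun_tstar[OF eps eps_star, symmetric])
    also have "\<dots> = G y" unfolding G_def by (simp add: tstar_tmult tstar_tens' e_star)
    finally show ?thesis .
  qed
  have A3form: "id_fun_id \<epsilon> (tmult3 mul (tens21 e one) (tens12 one (\<Delta> x))) = tmap G (\<lambda>z. z) (\<Delta> x)" for x
    unfolding G_def by (rule L6b[OF eps])
  have A3form2: "id_fun_id \<epsilon> (tmult3 mul (tens21 e one) (tens12 one (\<Delta> x)))
      = tmap (\<lambda>z. z) (\<lambda>z. fun_id \<epsilon> (tmult mul (tens z one) (\<Delta> x))) e" for x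
    by (rule L6a[OF eps])
  have starmap: "tstar st (tmap f (\<lambda>z. z) (\<Delta> (st x))) = tmap (\<lambda>y. st (f (st y))) (\<lambda>y. y) (\<Delta> x)"
    if "clinear f" for f x
    using tstar_tmap[OF that clinear_id, of "\<Delta> (st x)"] by (simp add: Dst tstar_tstar)
  show ?thesis
  proof
    assume I: "(\<forall>x y. fun_fun \<epsilon> \<epsilon> (tmult mul (tmult mul (tens x one) e) (tens one y)) = \<epsilon> (mul x y)) \<and>
          (\<forall>x. tmap \<epsilon>s id (\<Delta> x) = tmult mul (tens one x) e)"
    then have I2: "\<And>x y. fun_fun \<epsilon> \<epsilon> (tmult mul (tmult mul (tens x one) e) (tens one y)) = \<epsilon> (mul x y)"
      and I3: "\<And>x. tmap \<epsilon>s (\<lambda>z. z) (\<Delta> x) = tmult mul (tens one x) e"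
      by (auto simp: id_def)
    have A4: "\<epsilon>s x = H x" for x
    proof -
      have "\<epsilon>s x = \<epsilon>s (id_fun \<epsilon> (\<Delta> x))" by (simp add: eps_counit2)
      also have "\<dots> = id_fun \<epsilon> (tmap \<epsilon>s (\<lambda>z. z) (\<Delta> x))" by (rule C3[OF eps es_clin, symmetric])
      also have "\<dots> = H x" unfolding H_def I3 ..
      finally show ?thesis .
    qed
    have A3: "tmap G (\<lambda>z. z) (\<Delta> x) = tmult mul e (tens one x)" for x
    proof -
      have "tmap G (\<lambda>z. z) (\<Delta> x) = tmap (\<lambda>y. st (\<epsilon>s (st y))) (\<lambda>y. y) (\<Delta> x)"
        by (simp add: A4 HG)
      also have "\<dots> = tstar st (tmap \<epsilon>s (\<lambda>z. z) (\<Delta> (st x)))" by (rule starmap[OF es_clin, symmetric])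
      also have "\<dots> = tstar st (tmult mul (tens one (st x)) e)" by (simp only: I3)
      also have "\<dots> = tmult mul e (tens one x)" by (simp add: tstar_tmult tstar_tens' e_star)
      finally show ?thesis .
    qed
    have A2: "fun_id \<epsilon> (tmult mul (tmult mul (tens x one) e) (tens one y))
              = fun_id \<epsilon> (tmult mul (tens x one) (\<Delta> y))" for x y
    proof -
      define P where "P = fun_id \<epsilon> (tmult mul (tens x one) e)"
      define \<psi> where "\<psi> = (\<lambda>w. \<epsilon> (mul x w))"
      have psi: "cfunctional \<psi>" unfolding \<psi>_def by (rule cfun_mul[OF eps])
      have P2: "P = fun_id \<psi> e" unfolding P_def \<psi>_def by (rule C5[OF eps])
      have lhs: "fun_id \<epsilon> (tmult mul (tmult mul (tens x one) e) (tens one y)) = mul P y"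
        unfolding P_def by (rule C6[OF eps])
      have "fun_id \<epsilon> (tmult mul (tens x one) (tmult mul e (tens one y))) = fun_id \<psi> (tmult mul e (tens one y))"
        unfolding \<psi>_def by (rule C5[OF eps])
      also have "\<dots> = fun_id \<psi> (tmap (\<lambda>z. z) (\<lambda>z. mul z y) e)" by (simp only: C1)
      also have "\<dots> = mul P y" unfolding P2 by (rule C7[OF psi mul_clin1])
      finally have r1: "fun_id \<epsilon> (tmult mul (tens x one) (tmult mul e (tens one y))) = mul P y" .
      have "fun_id \<epsilon> (tmult mul (tens x one) (tmult mul e (tens one y)))
          = fun_id \<psi> (tmap (\<lambda>z. z) (\<lambda>z. fun_id \<epsilon> (tmult mul (tens z one) (\<Delta> y))) e)"
        unfolding \<psi>_def C5[OF eps, symmetric] A3[symmetric] A3form[symmetric] A3form2 ..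
      also have "\<dots> = fun_id \<epsilon> (tmult mul (tens P one) (\<Delta> y))"
        unfolding P2 by (rule C7[OF psi Lclin])
      also have "\<dots> = fun_id (\<lambda>w. \<epsilon> (mul P w)) (\<Delta> y)" by (rule C5[OF eps])
      also have "(\<lambda>w. \<epsilon> (mul P w)) = \<psi>"
      proof
        fix w
        have "\<epsilon> (mul P w) = \<epsilon> (fun_id \<epsilon> (tmult mul (tmult mul (tens x one) e) (tens one w)))"
          unfolding P_def C6[OF eps] ..
        also have "\<dots> = \<epsilon> (mul x w)" using I2[of x w] fun_fun_1[OF eps] by simp
        finally show "\<epsilon> (mul P w) = \<psi> w" unfolding \<psi>_def .
      qed
      also have "fun_id \<psi> (\<Delta> y) = fun_id \<epsilon> (tmult mul (tens x one) (\<Delta> y))"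
        unfolding \<psi>_def by (rule C5[OF eps, symmetric])
      finally have r2: "fun_id \<epsilon> (tmult mul (tens x one) (tmult mul e (tens one y)))
                        = fun_id \<epsilon> (tmult mul (tens x one) (\<Delta> y))" .
      show ?thesis using lhs r1 r2 by simp
    qed
    show "(\<forall>x y. fun_id \<epsilon> (tmult mul (tmult mul (tens x one) e) (tens one y))
                   = fun_id \<epsilon> (tmult mul (tens x one) (\<Delta> y))) \<and>
          (\<forall>x. id_fun_id \<epsilon> (tmult3 mul (tens21 e one) (tens12 one (\<Delta> x)))
                   = tmult mul e (tens one x)) \<and>
          (\<forall>x. \<epsilon>s x = id_fun \<epsilon> (tmult mul (tens one x) e))"
      using A2 A3 A4 A3form unfolding H_def by simp
  next
    assume II: "(\<forall>x y. fun_id \<epsilon> (tmult mul (tmult mul (tens x one) e) (tens one y))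
                   = fun_id \<epsilon> (tmult mul (tens x one) (\<Delta> y))) \<and>
          (\<forall>x. id_fun_id \<epsilon> (tmult3 mul (tens21 e one) (tens12 one (\<Delta> x)))
                   = tmult mul e (tens one x)) \<and>
          (\<forall>x. \<epsilon>s x = id_fun \<epsilon> (tmult mul (tens one x) e))"
    then have A2: "\<And>x y. fun_id \<epsilon> (tmult mul (tmult mul (tens x one) e) (tens one y))
                   = fun_id \<epsilon> (tmult mul (tens x one) (\<Delta> y))"
      and A3: "\<And>x. tmap G (\<lambda>z. z) (\<Delta> x) = tmult mul e (tens one x)"
      and A4: "\<And>x. \<epsilon>s x = H x"
      by (auto simp: A3form H_def)
    have I2: "fun_fun \<epsilon> \<epsilon> (tmult mul (tmult mul (tens x one) e) (tens one y)) = \<epsilon> (mul x y)" for x y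
    proof -
      have "fun_fun \<epsilon> \<epsilon> (tmult mul (tmult mul (tens x one) e) (tens one y))
          = \<epsilon> (fun_id \<epsilon> (tmult mul (tens x one) (\<Delta> y)))" by (simp add: fun_fun_1[OF eps] A2)
      also have "\<dots> = fun_fun \<epsilon> \<epsilon> (tmult mul (tens x one) (\<Delta> y))" by (simp add: fun_fun_1[OF eps])
      also have "\<dots> = \<epsilon> (mul x y)" by (simp add: fun_fun_2[OF eps] C4[OF eps] eps_counit2)
      finally show ?thesis .
    qed
    have I3: "tmap \<epsilon>s id (\<Delta> x) = tmult mul (tens one x) e" for x
    proof -
      have es: "\<epsilon>s = H" using A4 by auto
      have "tmap \<epsilon>s id (\<Delta> x) = tmap (\<lambda>y. st (G (st y))) (\<lambda>y. y) (\<Delta> x)"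
        by (simp add: es GH id_def)
      also have "\<dots> = tstar st (tmap G (\<lambda>z. z) (\<Delta> (st x)))" by (rule starmap[OF Gc, symmetric])
      also have "\<dots> = tstar st (tmult mul e (tens one (st x)))" by (simp only: A3)
      also have "\<dots> = tmult mul (tens one x) e" by (simp add: tstar_tmult tstar_tens' e_star)
      finally show ?thesis .
    qed
    show "(\<forall>x y. fun_fun \<epsilon> \<epsilon> (tmult mul (tmult mul (tens x one) e) (tens one y))
                   = \<epsilon> (mul x y)) \<and>
          (\<forall>x. tmap \<epsilon>s id (\<Delta> x) = tmult mul (tens one x) e)"
      using I2 I3 by simp
  qed
qed

end
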